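(* Consider factor graphs of LDPC codes with $N$ variable nodes and $M$ check nodes, all check nodes of degree $d_c$, variable node degree distribution (edge perspective) $\{\lambda_i\}$, and design rate $R=1-\frac{1/d_c}{\sum_j\lambda_j/j}=1-\frac{M}{N}$. A factor graph with this degree distribution having no cycles of variable nodes of degree two and three (i.e., in which the subgraph consisting of all variable nodes of degree two or three, all check nodes, and the edges between them contains no cycle) exists if and only if $$3\lambda_2+4\lambda_3\le\frac{6}{d_c}\,\frac{(1-R)-\frac1N}{1-R}.$$ Moreover, the right-hand side is strictly less than $\frac{6}{d_c}$.
   Context: $\lambda_i$ denotes the fraction of edges of the factor graph connected to variable nodes of degree $i$; the node-perspective fractions are $\Lambda_i=\frac{\lambda_i/i}{\sum_j\lambda_j/j}$, the fraction of variable nodes of degree $i$. The factor graph is the bipartite graph between variable nodes and check nodes of the parity-check matrix. *)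

theory Defs
  imports Complex_Main
begin

definition factor_graph :: "nat \<Rightarrow> nat \<Rightarrow> (nat \<times> nat) set \<Rightarrow> bool" where
  "factor_graph N M E \<longleftrightarrow> E \<subseteq> {..<N} \<times> {..<M}"

definition vdeg :: "(nat \<times> nat) set \<Rightarrow> nat \<Rightarrow> nat" where
  "vdeg E v = card {c. (v, c) \<in> E}"

definition cdeg :: "(nat \<times> nat) set \<Rightarrow> nat \<Rightarrow> nat" where
  "cdeg E c = card {v. (v, c) \<in> E}"

definition edge_dist :: "(nat \<times> nat) set \<Rightarrow> nat \<Rightarrow> real" where
  "edge_dist E i = real (card {e \<in> E. vdeg E (fst e) = i}) / real (card E)"

definition ldpc_graph ::
  "nat \<Rightarrow> nat \<Rightarrow> nat \<Rightarrow> (nat \<Rightarrow> real) \<Rightarrow> (nat \<times> nat) set \<Rightarrow> bool" where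
  "ldpc_graph N M dc lam E \<longleftrightarrow>
     factor_graph N M E \<and> E \<noteq> {} \<and>
     (\<forall>c<M. cdeg E c = dc) \<and>
     (\<forall>i. lam i = edge_dist E i)"

definition design_rate :: "nat \<Rightarrow> (nat \<Rightarrow> real) \<Rightarrow> real" where
  "design_rate dc lam =
     1 - (1 / real dc) / (\<Sum>j\<in>{j. 1 \<le> j \<and> lam j \<noteq> 0}. lam j / real j)"

fun adj23 :: "(nat \<times> nat) set \<Rightarrow> nat + nat \<Rightarrow> nat + nat \<Rightarrow> bool" where
  "adj23 E (Inl v) (Inr c) \<longleftrightarrow> (v, c) \<in> E \<and> vdeg E v \<in> {2, 3}"
| "adj23 E (Inr c) (Inl v) \<longleftrightarrow> (v, c) \<in> E \<and> vdeg E v \<in> {2, 3}"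
| "adj23 E _ _ \<longleftrightarrow> False"

definition has_cycle23 :: "(nat \<times> nat) set \<Rightarrow> bool" where
  "has_cycle23 E \<longleftrightarrow>
     (\<exists>vs. length vs \<ge> 3 \<and> distinct vs \<and>
        (\<forall>i < length vs. adj23 E (vs ! i) (vs ! ((i + 1) mod length vs))))"

end

theory Submission
  imports Defs
begin


fun blk :: "nat list \<Rightarrow> nat \<Rightarrow> nat" where
  "blk [] t = 0"
| "blk (l#ls) t = (if t < l then 0 else Suc (blk ls (t - l)))"

lemma blk_lt: "t < sum_list ls \<Longrightarrow> blk ls t < length ls"
  by (induction ls arbitrary: t) auto

lemma take_le_sum: "k < length (ls::nat list) \<Longrightarrow> sum_list (take k ls) + ls!k \<le> sum_list ls"
proof (induction ls arbitrary: k)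
  case Nil then show ?case by simp
next
  case (Cons a ls) then show ?case by (cases k) auto
qed

lemma blk_iff: "k < length ls \<Longrightarrow> t < sum_list ls \<Longrightarrow>
   (blk ls t = k) = (sum_list (take k ls) \<le> t \<and> t < sum_list (take k ls) + ls!k)"
proof (induction ls arbitrary: k t)
  case Nil then show ?case by simp
next
  case (Cons a ls)
  show ?case
  proof (cases k)
    case 0 then show ?thesis by auto
  next
    case (Suc k')
    show ?thesis
    proof (cases "t < a")
      case True then show ?thesis using Suc by auto
    next
      case False
      then have "t - a < sum_list ls" using Cons.prems by auto
      then show ?thesis using Cons.IH[of k' "t - a"] Cons.prems Suc False by (auto; arith)
    qed
  qed
qed

lemma blk_set: "k < length ls \<Longrightarrow>
   {t. t < sum_list ls \<and> blk ls t = k} = {sum_list (take k ls) ..< sum_list (take k ls) + ls!k}"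
proof -
  assume k: "k < length ls"
  have "x \<in> {t. t < sum_list ls \<and> blk ls t = k} \<longleftrightarrow> x \<in> {sum_list (take k ls) ..< sum_list (take k ls) + ls!k}" for x
    using blk_iff[of k ls x, OF k] take_le_sum[of k ls, OF k] by auto
  then show ?thesis by blast
qed

lemma blk_card: "k < length ls \<Longrightarrow> card {t. t < sum_list ls \<and> blk ls t = k} = ls!k"
  by (simp add: blk_set)

lemma blk_close: "t < sum_list (ls::nat list) \<Longrightarrow> t' < sum_list ls \<Longrightarrow> blk ls t = blk ls t' \<Longrightarrow> t \<le> t'
  \<Longrightarrow> t' < t + ls ! (blk ls t)"
  using blk_iff[of "blk ls t" ls t] blk_iff[of "blk ls t" ls t'] blk_lt[of t ls] by auto



definition is_cyc :: "('a \<Rightarrow> 'a \<Rightarrow> bool) \<Rightarrow> 'a list \<Rightarrow> bool" where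
  "is_cyc G vs \<longleftrightarrow> length vs \<ge> 3 \<and> distinct vs \<and>
        (\<forall>i < length vs. G (vs ! i) (vs ! ((i + 1) mod length vs)))"

lemma path_cycle:
  fixes G :: "'a \<Rightarrow> 'a \<Rightarrow> bool"
  assumes fin: "finite W"
    and sym: "\<And>x y. G x y \<Longrightarrow> G y x"
    and irr: "\<And>x. \<not> G x x"
    and two: "\<And>x. x \<in> W \<Longrightarrow> \<exists>y z. y \<noteq> z \<and> G x y \<and> G x z"
    and inW: "\<And>x y. G x y \<Longrightarrow> y \<in> W"
  shows "distinct xs \<Longrightarrow> length xs \<ge> 2 \<Longrightarrow> set xs \<subseteq> W \<Longrightarrow>
     (\<forall>i. i + 1 < length xs \<longrightarrow> G (xs!i) (xs!(i+1))) \<Longrightarrow> \<exists>vs. is_cyc G vs"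
proof (induction "card W - length xs" arbitrary: xs rule: less_induct)
  case (less xs)
  have x0W: "xs!0 \<in> W" using less.prems(2,3) nth_mem[of 0 xs] by (meson in_mono less_le_trans pos2)
  obtain y where y: "G (xs!0) y" "y \<noteq> xs!1"
    using two[OF x0W] by metis
  show ?case
  proof (cases "y \<in> set xs")
    case False
    have d: "distinct (y # xs)" using False less.prems by auto
    have lenW: "length xs \<le> card W"
      using less.prems(1,3) fin by (metis card_mono distinct_card)
    have len2: "length (y#xs) \<le> card W"
      using d less.prems(3) fin inW[OF y(1)] by (metis card_mono distinct_card insert_subset list.simps(15))
    have path: "\<forall>i. i + 1 < length (y#xs) \<longrightarrow> G ((y#xs)!i) ((y#xs)!(i+1))"
    proof (intro allI impI)
      fix i assume "i + 1 < length (y#xs)"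
      show "G ((y#xs)!i) ((y#xs)!(i+1))"
      proof (cases i)
        case 0 then show ?thesis using sym[OF y(1)] by simp
      next
        case (Suc j) then show ?thesis using less.prems(4) \<open>i + 1 < length (y#xs)\<close> by auto
      qed
    qed
    show ?thesis
      apply (rule less.hyps[of "y#xs"])
      using len2 d less.prems inW[OF y(1)] apply auto[4]
      using path by blast
  next
    case True
    then obtain j where j: "j < length xs" "xs!j = y" by (metis in_set_conv_nth)
    have j0: "j \<noteq> 0" using j irr y(1) by (metis)
    have j1: "j \<noteq> 1" using j y(2) by auto
    define vs where "vs = take (Suc j) xs"
    have lv: "length vs = Suc j" using j vs_def by simp
    have "is_cyc G vs"
      unfolding is_cyc_def
    proof (intro conjI allI impI)
      show "3 \<le> length vs" using lv j0 j1 by simp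
      show "distinct vs" using less.prems(1) vs_def by simp
      fix i assume i: "i < length vs"
      show "G (vs ! i) (vs ! ((i + 1) mod length vs))"
      proof (cases "i = j")
        case True
        then show ?thesis using lv vs_def j sym[OF y(1)] by simp
      next
        case False
        then have "i + 1 < Suc j" using i lv by simp
        then show ?thesis using lv vs_def j less.prems(4) by simp
      qed
    qed
    then show ?thesis by blast
  qed
qed

lemma cycle_exists:
  fixes G :: "'a \<Rightarrow> 'a \<Rightarrow> bool"
  assumes fin: "finite W" and ne: "W \<noteq> {}"
    and sym: "\<And>x y. G x y \<Longrightarrow> G y x"
    and irr: "\<And>x. \<not> G x x"
    and two: "\<And>x. x \<in> W \<Longrightarrow> \<exists>y z. y \<noteq> z \<and> G x y \<and> G x z"
    and inW: "\<And>x y. G x y \<Longrightarrow> y \<in> W"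
  shows "\<exists>vs. is_cyc G vs"
proof -
  obtain x where x: "x \<in> W" using ne by blast
  then obtain y where y: "G x y" using two by blast
  have "x \<noteq> y" using y irr by blast
  then show ?thesis
    using path_cycle[OF fin sym irr two inW, where xs="[x,y]"] x inW[OF y] y by auto
qed

fun adjF :: "('a \<times> 'b) set \<Rightarrow> 'a + 'b \<Rightarrow> 'a + 'b \<Rightarrow> bool" where
  "adjF F (Inl a) (Inr c) \<longleftrightarrow> (a, c) \<in> F"
| "adjF F (Inr c) (Inl a) \<longleftrightarrow> (a, c) \<in> F"
| "adjF F _ _ \<longleftrightarrow> False"

lemma adjF_mono: "F' \<subseteq> F \<Longrightarrow> adjF F' x y \<Longrightarrow> adjF F x y"
  by (cases x; cases y) auto

lemma cyc_mono: "F' \<subseteq> F \<Longrightarrow> is_cyc (adjF F') vs \<Longrightarrow> is_cyc (adjF F) vs"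
  unfolding is_cyc_def using adjF_mono by blast

lemma adjF_sym: "adjF F x y \<Longrightarrow> adjF F y x"
  by (cases x; cases y) auto

lemma adjF_irr: "\<not> adjF F x x"
  by (cases x) auto

lemma two_elems: "finite S \<Longrightarrow> \<not> card S \<le> 1 \<Longrightarrow> \<exists>x y. x \<in> S \<and> y \<in> S \<and> x \<noteq> y"
  using card_le_Suc0_iff_eq by fastforce

lemma forest_bound:
  "finite A \<Longrightarrow> finite C \<Longrightarrow> F \<subseteq> A \<times> C \<Longrightarrow> \<not> (\<exists>vs. is_cyc (adjF F) vs) \<Longrightarrow>
   card A + card C > 0 \<Longrightarrow> card F < card A + card C"
proof (induction "card A + card C" arbitrary: A C F rule: less_induct)
  case less
  note finA = less.prems(1) and finC = less.prems(2) and sub = less.prems(3)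
    and acyc = less.prems(4) and pos = less.prems(5)
  have finF: "finite F" using finA finC sub finite_subset by blast
  show ?case
  proof (cases "\<exists>a\<in>A. card {c. (a, c) \<in> F} \<le> 1")
    case True
    then obtain a where a: "a \<in> A" "card {c. (a, c) \<in> F} \<le> 1" by blast
    define F' where "F' = {e \<in> F. fst e \<noteq> a}"
    have split: "F = F' \<union> ({a} \<times> {c. (a, c) \<in> F})" unfolding F'_def by auto
    have disj: "F' \<inter> ({a} \<times> {c. (a, c) \<in> F}) = {}" unfolding F'_def by auto
    have fin1: "finite ({a} \<times> {c. (a, c) \<in> F})"
      by (rule finite_subset[OF _ finite_SigmaI[OF finite.insertI[OF finite.emptyI] finC]]) (use sub in auto)
    have finF': "finite F'" unfolding F'_def using finF by simp
    have cF: "card F = card F' + card {c. (a, c) \<in> F}"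
      using card_Un_disjoint[OF finF' fin1 disj] split by (simp add: card_cartesian_product)
    have cA: "card (A - {a}) + 1 = card A" using card_Suc_Diff1[OF finA a(1)] by simp
    show ?thesis
    proof (cases "card (A - {a}) + card C = 0")
      case True
      then have "C = {}" using finC by simp
      then have "F = {}" using sub by auto
      then show ?thesis using pos by simp
    next
      case False
      have sub': "F' \<subseteq> (A - {a}) \<times> C" unfolding F'_def using sub by auto
      have acyc': "\<not> (\<exists>vs. is_cyc (adjF F') vs)"
        using acyc cyc_mono[of F' F] unfolding F'_def by blast
      have "card F' < card (A - {a}) + card C"
      proof -
        have lt: "card (A - {a}) + card C < card A + card C" using cA by simp
        show ?thesis using less.hyps[OF lt finite_Diff[OF finA] finC sub' acyc'] False by simp
      qed
      then show ?thesis using cF a(2) cA by linarith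
    qed
  next
    case noA: False
    show ?thesis
    proof (cases "\<exists>c\<in>C. card {a. (a, c) \<in> F} \<le> 1")
      case True
      then obtain c where c: "c \<in> C" "card {a. (a, c) \<in> F} \<le> 1" by blast
      define F' where "F' = {e \<in> F. snd e \<noteq> c}"
      have split: "F = F' \<union> ({a. (a, c) \<in> F} \<times> {c})" unfolding F'_def by auto
      have disj: "F' \<inter> ({a. (a, c) \<in> F} \<times> {c}) = {}" unfolding F'_def by auto
      have fin1: "finite ({a. (a, c) \<in> F} \<times> {c})"
        by (rule finite_subset[OF _ finite_SigmaI[OF finA finite.insertI[OF finite.emptyI]]]) (use sub in auto)
      have finF': "finite F'" unfolding F'_def using finF by simp
      have cF: "card F = card F' + card {a. (a, c) \<in> F}"
        using card_Un_disjoint[OF finF' fin1 disj] split by (simp add: card_cartesian_product)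
      have cC: "card (C - {c}) + 1 = card C" using card_Suc_Diff1[OF finC c(1)] by simp
      show ?thesis
      proof (cases "card A + card (C - {c}) = 0")
        case True
        then have "A = {}" using finA by simp
        then have "F = {}" using sub by auto
        then show ?thesis using pos by simp
      next
        case False
        have sub': "F' \<subseteq> A \<times> (C - {c})" unfolding F'_def using sub by auto
        have acyc': "\<not> (\<exists>vs. is_cyc (adjF F') vs)"
          using acyc cyc_mono[of F' F] unfolding F'_def by blast
        have "card F' < card A + card (C - {c})"
        proof -
          have lt: "card A + card (C - {c}) < card A + card C" using cC by simp
          show ?thesis using less.hyps[OF lt finA finite_Diff[OF finC] sub' acyc'] False by simp
        qed
        then show ?thesis using cF c(2) cC by linarith
      qed
    next
      case noC: False
      define W where "W = Inl ` A \<union> Inr ` C"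
      have "\<exists>vs. is_cyc (adjF F) vs"
      proof (rule cycle_exists[of W])
        show "finite W" unfolding W_def using finA finC by simp
        show "W \<noteq> {}" unfolding W_def using pos by auto
        show "adjF F x y \<Longrightarrow> adjF F y x" for x y by (rule adjF_sym)
        show "\<not> adjF F x x" for x by (rule adjF_irr)
        show "adjF F x y \<Longrightarrow> y \<in> W" for x y
          unfolding W_def using sub by (cases x; cases y) auto
        show "\<exists>y z. y \<noteq> z \<and> adjF F x y \<and> adjF F x z" if "x \<in> W" for x
        proof -
          consider (l) a where "x = Inl a" "a \<in> A" | (r) c where "x = Inr c" "c \<in> C"
            using \<open>x \<in> W\<close> unfolding W_def by blast
          then show ?thesis
          proof cases
            case l
            have fn: "finite {c. (a, c) \<in> F}" using finite_subset[OF _ finC, of "{c. (a, c) \<in> F}"] sub by auto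
            have nc: "\<not> card {c. (a, c) \<in> F} \<le> 1" using noA l(2) by blast
            obtain c1 c2 where "c1 \<in> {c. (a, c) \<in> F}" "c2 \<in> {c. (a, c) \<in> F}" "c1 \<noteq> c2"
              using two_elems[OF fn nc] by blast
            then show ?thesis using l(1) by (intro exI[of _ "Inr c1"] exI[of _ "Inr c2"]) auto
          next
            case r
            have fn: "finite {a. (a, c) \<in> F}" using finite_subset[OF _ finA, of "{a. (a, c) \<in> F}"] sub by auto
            have nc: "\<not> card {a. (a, c) \<in> F} \<le> 1" using noC r(2) by blast
            obtain a1 a2 where "a1 \<in> {a. (a, c) \<in> F}" "a2 \<in> {a. (a, c) \<in> F}" "a1 \<noteq> a2"
              using two_elems[OF fn nc] by blast
            then show ?thesis using r(1) by (intro exI[of _ "Inl a1"] exI[of _ "Inl a2"]) auto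
          qed
        qed
      qed
      then show ?thesis using acyc by blast
    qed
  qed
qed



lemma adj23_cases:
  "adj23 E x y \<Longrightarrow> (\<exists>v c. x = Inl v \<and> y = Inr c \<and> adj23 E (Inl v) (Inr c)) \<or>
                   (\<exists>v c. x = Inr c \<and> y = Inl v \<and> adj23 E (Inl v) (Inr c))"
  by (cases x; cases y) auto

lemma no_cycle_rank:
  fixes E and rk :: "nat \<Rightarrow> nat" and f :: "nat \<Rightarrow> nat"
  assumes H: "\<And>v u c. adj23 E (Inl v) (Inr c) \<Longrightarrow> adj23 E (Inl u) (Inr c) \<Longrightarrow> u \<noteq> v \<Longrightarrow> rk u \<le> rk v \<Longrightarrow> c = f v"
  shows "\<not> has_cycle23 E"
proof
  assume "has_cycle23 E"
  then obtain vs where n3: "length vs \<ge> 3" and dis: "distinct vs"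
    and adj: "\<And>i. i < length vs \<Longrightarrow> adj23 E (vs ! i) (vs ! ((i + 1) mod length vs))"
    unfolding has_cycle23_def by blast
  define n where "n = length vs"
  define nxt where "nxt i = (if i + 1 = n then 0 else i + 1)" for i
  define prv where "prv i = (if i = 0 then n - 1 else i - 1)" for i
  have nxt_eq: "(i + 1) mod n = nxt i" if "i < n" for i
    using that unfolding nxt_def by auto
  have adjn: "adj23 E (vs ! i) (vs ! nxt i)" if "i < n" for i
    using adj[of i] nxt_eq[of i] that n_def by simp
  have nxt_lt: "i < n \<Longrightarrow> nxt i < n" for i unfolding nxt_def using n3 n_def by auto
  have prv_lt: "i < n \<Longrightarrow> prv i < n" for i unfolding prv_def using n3 n_def by auto
  have np: "i < n \<Longrightarrow> nxt (prv i) = i" for i unfolding nxt_def prv_def using n3 n_def by auto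
  have nn: "i < n \<Longrightarrow> nxt (nxt i) \<noteq> i" for i unfolding nxt_def using n3 n_def by auto
  have pp: "i < n \<Longrightarrow> prv (prv i) \<noteq> i" for i unfolding prv_def using n3 n_def by auto
  have pn: "i < n \<Longrightarrow> prv i \<noteq> nxt i" for i unfolding nxt_def prv_def using n3 n_def by auto
  have adjp: "adj23 E (vs ! prv i) (vs ! i)" if "i < n" for i
    using adjn[OF prv_lt[OF that]] np[OF that] by simp
  define I where "I = {i. i < n \<and> (\<exists>v. vs ! i = Inl v)}"
  define val where "val i = rk (projl (vs ! i))" for i
  have "I \<noteq> {}"
  proof (cases "\<exists>v. vs ! 0 = Inl v")
    case True
    have "0 \<in> I" unfolding I_def using True n3 n_def by auto
    then show ?thesis by blast
  next
    case False
    have "adj23 E (vs ! 0) (vs ! nxt 0)" using adjn[of 0] n3 n_def by force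
    then have "\<exists>v. vs ! nxt 0 = Inl v" using False adj23_cases by blast
    moreover have "nxt 0 < n" using nxt_lt[of 0] n3 n_def by force
    ultimately have "nxt 0 \<in> I" unfolding I_def by auto
    then show ?thesis by blast
  qed
  moreover have "finite I" unfolding I_def by simp
  ultimately have "Max (val ` I) \<in> val ` I" by simp
  then obtain i where iI: "i \<in> I" and imax: "val i = Max (val ` I)" by auto
  have ge: "j \<in> I \<Longrightarrow> val j \<le> val i" for j using imax \<open>finite I\<close> by simp
  obtain v where v: "vs ! i = Inl v" and il: "i < n" using iI unfolding I_def by auto
  obtain c2 where c2: "vs ! nxt i = Inr c2" "adj23 E (Inl v) (Inr c2)"
    using adj23_cases[OF adjn[OF il]] v by auto
  obtain u2 where u2: "vs ! nxt (nxt i) = Inl u2" "adj23 E (Inl u2) (Inr c2)"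
    using adj23_cases[OF adjn[OF nxt_lt[OF il]]] c2 by auto
  obtain c1 where c1: "vs ! prv i = Inr c1" "adj23 E (Inl v) (Inr c1)"
    using adj23_cases[OF adjp[OF il]] v by auto
  obtain u1 where u1: "vs ! prv (prv i) = Inl u1" "adj23 E (Inl u1) (Inr c1)"
    using adj23_cases[OF adjp[OF prv_lt[OF il]]] c1 by auto
  have ilen: "i < length vs" using il n_def by simp
  have "vs ! nxt (nxt i) \<noteq> vs ! i"
    using nth_eq_iff_index_eq[OF dis, of "nxt (nxt i)" i] nxt_lt[OF nxt_lt[OF il]] ilen nn[OF il] n_def by simp
  then have u2v: "u2 \<noteq> v" using u2(1) v by auto
  have "vs ! prv (prv i) \<noteq> vs ! i"
    using nth_eq_iff_index_eq[OF dis, of "prv (prv i)" i] prv_lt[OF prv_lt[OF il]] ilen pp[OF il] n_def by simp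
  then have u1v: "u1 \<noteq> v" using u1(1) v by auto
  have r2: "rk u2 \<le> rk v"
    using ge[of "nxt (nxt i)"] u2(1) v nxt_lt[OF nxt_lt[OF il]] unfolding I_def val_def by auto
  have r1: "rk u1 \<le> rk v"
    using ge[of "prv (prv i)"] u1(1) v prv_lt[OF prv_lt[OF il]] unfolding I_def val_def by auto
  have "c1 = c2" using H[OF c1(2) u1(2) u1v r1] H[OF c2(2) u2(2) u2v r2] by simp
  then have "vs ! prv i = vs ! nxt i" using c1 c2 by simp
  moreover have "vs ! prv i \<noteq> vs ! nxt i"
    using nth_eq_iff_index_eq[OF dis, of "prv i" "nxt i"] prv_lt[OF il] nxt_lt[OF il] pn[OF il] n_def by simp
  ultimately show False by simp
qed



lemma card_fst_sum:
  assumes sub: "E \<subseteq> {..<N} \<times> {..<M}"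
  shows "card {e \<in> E. P (fst e)} = (\<Sum>v \<in> {v. v < N \<and> P v}. vdeg E v)"
proof -
  have eq: "{e \<in> E. P (fst e)} = (SIGMA v:{v. v < N \<and> P v}. {c. (v, c) \<in> E})"
    using sub by auto
  have fin: "\<forall>v\<in>{v. v < N \<and> P v}. finite {c. (v, c) \<in> E}"
  proof
    fix v show "finite {c. (v, c) \<in> E}"
      by (rule finite_subset[of _ "{..<M}"]) (use sub in auto)
  qed
  show ?thesis unfolding eq vdeg_def using fin by simp
qed

lemma card_snd_sum:
  assumes sub: "E \<subseteq> {..<N} \<times> {..<M}"
  shows "card E = (\<Sum>c<M. cdeg E c)"
proof -
  have eq: "prod.swap ` E = (SIGMA c:{..<M}. {v. (v, c) \<in> E})"
  proof (intro set_eqI)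
    fix x :: "nat \<times> nat"
    obtain a b where x: "x = (a, b)" by (cases x)
    show "x \<in> prod.swap ` E \<longleftrightarrow> x \<in> (SIGMA c:{..<M}. {v. (v, c) \<in> E})"
    proof -
      have "(b, a) \<in> E \<Longrightarrow> a < M" using sub by blast
      then show ?thesis unfolding x pair_in_swap_image mem_Sigma_iff by blast
    qed
  qed
  have fin: "\<forall>c\<in>{..<M}. finite {v. (v, c) \<in> E}"
  proof
    fix c show "finite {v. (v, c) \<in> E}"
      by (rule finite_subset[of _ "{..<N}"]) (use sub in auto)
  qed
  have "card E = card (prod.swap ` E)" by (simp add: card_image)
  also have "\<dots> = (\<Sum>c<M. cdeg E c)" unfolding eq cdeg_def using fin by simp
  finally show ?thesis .
qed

lemma card_deg_i:
  assumes sub: "E \<subseteq> {..<N} \<times> {..<M}"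
  shows "card {e \<in> E. vdeg E (fst e) = i} = i * card {v. v < N \<and> vdeg E v = i}"
proof -
  have "(\<Sum>v \<in> {v. v < N \<and> vdeg E v = i}. vdeg E v) = (\<Sum>v \<in> {v. v < N \<and> vdeg E v = i}. i)"
    by (rule sum.cong) auto
  then show ?thesis using card_fst_sum[OF sub, of "\<lambda>v. vdeg E v = i"] by simp
qed

lemma adj23_adjF: "adj23 E = adjF {e \<in> E. vdeg E (fst e) \<in> {2,3}}"
proof (intro ext)
  fix x y show "adj23 E x y = adjF {e \<in> E. vdeg E (fst e) \<in> {2,3}} x y"
    by (cases x; cases y) auto
qed

lemma has_cycle23_iff: "has_cycle23 E \<longleftrightarrow> (\<exists>vs. is_cyc (adjF {e \<in> E. vdeg E (fst e) \<in> {2,3}}) vs)"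
  unfolding has_cycle23_def is_cyc_def adj23_adjF[symmetric] by (rule refl)
lemma acyclic_bound:
  assumes sub: "E \<subseteq> {..<N} \<times> {..<M}" and M: "M > 0" and ac: "\<not> has_cycle23 E"
  shows "card {v. v < N \<and> vdeg E v = 2} + 2 * card {v. v < N \<and> vdeg E v = 3} + 1 \<le> M"
proof -
  define F where "F = {e \<in> E. vdeg E (fst e) \<in> {2,3}}"
  define A where "A = {v. v < N \<and> vdeg E v \<in> {2,3}}"
  define A2 where "A2 = {v. v < N \<and> vdeg E v = 2}"
  define A3 where "A3 = {v. v < N \<and> vdeg E v = 3}"
  have AU: "A = A2 \<union> A3" unfolding A_def A2_def A3_def by auto
  have dj: "A2 \<inter> A3 = {}" unfolding A2_def A3_def by auto
  have f2: "finite A2" "finite A3" unfolding A2_def A3_def by auto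
  have cA: "card A = card A2 + card A3" unfolding AU by (rule card_Un_disjoint[OF f2 dj])
  have s1: "card F = (\<Sum>v\<in>A. vdeg E v)"
    using card_fst_sum[OF sub, of "\<lambda>v. vdeg E v \<in> {2,3}"] unfolding F_def A_def .
  have s2: "(\<Sum>v\<in>A. vdeg E v) = (\<Sum>v\<in>A2. vdeg E v) + (\<Sum>v\<in>A3. vdeg E v)"
    unfolding AU by (rule sum.union_disjoint[OF f2 dj])
  have s3: "(\<Sum>v\<in>A2. vdeg E v) = 2 * card A2"
  proof -
    have "(\<Sum>v\<in>A2. vdeg E v) = (\<Sum>v\<in>A2. 2)" by (rule sum.cong) (auto simp: A2_def)
    then show ?thesis by simp
  qed
  have s4: "(\<Sum>v\<in>A3. vdeg E v) = 3 * card A3"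
  proof -
    have "(\<Sum>v\<in>A3. vdeg E v) = (\<Sum>v\<in>A3. 3)" by (rule sum.cong) (auto simp: A3_def)
    then show ?thesis by simp
  qed
  have cF: "card F = 2 * card A2 + 3 * card A3" using s1 s2 s3 s4 by simp
  have "card F < card A + card {..<M}"
  proof (rule forest_bound[of A "{..<M}" F])
    show "finite A" unfolding A_def by simp
    show "finite {..<M}" by simp
    show "F \<subseteq> A \<times> {..<M}"
    proof
      fix e assume "e \<in> F"
      then have e: "e \<in> E" "vdeg E (fst e) \<in> {2,3}" unfolding F_def by auto
      have "e \<in> {..<N} \<times> {..<M}" using sub e(1) by (rule subsetD)
      then show "e \<in> A \<times> {..<M}" unfolding A_def using e(2) by (simp add: mem_Times_iff)
    qed
    show "\<not> (\<exists>vs. is_cyc (adjF F) vs)" using ac unfolding has_cycle23_iff F_def .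
    show "0 < card A + card {..<M}" using M by simp
  qed
  then have "card A2 + 2 * card A3 + 1 \<le> M" using cF cA by simp
  then show ?thesis unfolding A2_def A3_def .
qed



lemma mod_close:
  fixes X t t' M :: nat
  assumes "t \<le> t'" "t' < t + M" "(X + t) mod M = (X + t') mod M"
  shows "t = t'"
proof -
  have "M dvd (X + t') - (X + t)" using assms(1,3) mod_eq_dvd_iff_nat[of "X+t" "X+t'" M] by simp
  then have "M dvd t' - t" by simp
  moreover have "t' - t < M" using assms by simp
  ultimately have "t' - t = 0" using dvd_imp_le by (metis gr0I nat_dvd_not_less)
  then show ?thesis using assms(1) by simp
qed

lemma inj_mod_interval:
  fixes X off l M :: nat
  assumes "l \<le> M"
  shows "inj_on (\<lambda>t. (X + t) mod M) {off..<off+l}"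
proof (rule inj_onI)
  fix x y assume x: "x \<in> {off..<off+l}" and y: "y \<in> {off..<off+l}" and e: "(X + x) mod M = (X + y) mod M"
  show "x = y"
  proof (cases "x \<le> y")
    case True then show ?thesis using mod_close[of x y M X] x y e assms by auto
  next
    case False then show ?thesis using mod_close[of y x M X] x y e assms by auto
  qed
qed

lemma cnt_below:
  fixes M c b :: nat
  assumes "c < M"
  shows "card {u. u < b \<and> u mod M = c} = b div M + (if c < b mod M then 1 else 0)"
proof (induction b)
  case 0 then show ?case by simp
next
  case (Suc b)
  have eq: "{u. u < Suc b \<and> u mod M = c} = {u. u < b \<and> u mod M = c} \<union> (if b mod M = c then {b} else {})"
    by (auto simp: less_Suc_eq)
  have c1: "card {u. u < Suc b \<and> u mod M = c} = card {u. u < b \<and> u mod M = c} + (if b mod M = c then 1 else 0)"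
    unfolding eq by (auto simp: card_insert_if)
  have M0: "M > 0" using assms by simp
  show ?case
  proof (cases "Suc (b mod M) = M")
    case True
    then have "Suc b mod M = 0" "Suc b div M = Suc (b div M)"
      using M0 by (auto simp: mod_Suc div_Suc)
    then show ?thesis using c1 Suc.IH True assms by auto
  next
    case False
    then have "Suc b mod M = Suc (b mod M)" "Suc b div M = b div M"
      using M0 by (auto simp: mod_Suc div_Suc)
    then show ?thesis using c1 Suc.IH False assms by auto
  qed
qed

lemma ind_sum: "(\<Sum>k<(m::nat). (if P k then 1 else 0::nat)) = card {k. k < m \<and> P k}"
proof (induction m)
  case 0 then show ?case by simp
next
  case (Suc m)
  have "{k. k < Suc m \<and> P k} = {k. k < m \<and> P k} \<union> (if P m then {m} else {})" by (auto simp: less_Suc_eq)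
  then show ?case using Suc by (simp add: card_insert_if)
qed

lemma sum_list_upt_nat: "sum_list (map f [0..<m]) = (\<Sum>k<m. (f k::nat))"
  by (simp add: atLeast_upt interv_sum_list_conv_sum_set_nat)

lemma sum_list_nth_nat: "sum_list (map d zs) = (\<Sum>k<length zs. (d (zs!k)::nat))"
  by (simp add: sum_list_sum_nth atLeast0LessThan)

lemma junction_arith:
  fixes k k' c S L b :: nat
  assumes "k' < k" "(c < S \<and> b = k) \<or> (k < L \<and> c = S+k) \<or> (1 \<le> k \<and> k \<le> L \<and> c = S+k-1)"
    "(c < S \<and> b = k') \<or> (k' < L \<and> c = S+k') \<or> (1 \<le> k' \<and> k' \<le> L \<and> c = S+k'-1)"
  shows "c = S + k - 1"
  using assms by linarith

lemma construct:
  fixes N M dc :: nat and d :: "nat \<Rightarrow> nat"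
  assumes Mpos: "M > 0" and dle: "\<And>v. v < N \<Longrightarrow> d v \<le> M" and tot: "(\<Sum>v<N. d v) = M * dc"
    and cond: "(\<Sum>v\<in>{v. v < N \<and> d v \<in> {2,3}}. d v) + 1 \<le> card {v. v < N \<and> d v \<in> {2,3}} + M"
  shows "\<exists>E'. E' \<subseteq> {..<N} \<times> {..<M} \<and> (\<forall>v<N. vdeg E' v = d v) \<and> (\<forall>c<M. cdeg E' c = dc) \<and> \<not> has_cycle23 E'"
proof -
  define V23 where "V23 = {v. v < N \<and> d v \<in> {2,3}}"
  define VR where "VR = {v. v < N \<and> d v \<notin> {2,3}}"
  define zs where "zs = sorted_list_of_set V23"
  define ys where "ys = sorted_list_of_set VR"
  define m where "m = length zs"
  have finV: "finite V23" "finite VR" unfolding V23_def VR_def by auto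
  have dz: "distinct zs" and sz: "set zs = V23" unfolding zs_def using finV by auto
  have dy: "distinct ys" and sy: "set ys = VR" unfolding ys_def using finV by auto
  have disj: "set zs \<inter> set ys = {}" using sz sy unfolding V23_def VR_def by auto
  have cover: "v < N \<Longrightarrow> v \<in> set zs \<or> v \<in> set ys" for v using sz sy unfolding V23_def VR_def by auto
  have zsN: "v \<in> set zs \<Longrightarrow> v < N" for v using sz unfolding V23_def by auto
  have ysN: "v \<in> set ys \<Longrightarrow> v < N" for v using sy unfolding VR_def by auto
  have mc: "m = card V23" unfolding m_def using dz sz distinct_card by metis
  define T where "T = (\<Sum>v\<in>V23. d v)"
  have Tl: "T = sum_list (map d zs)" unfolding T_def using dz sz by (simp add: sum_list_distinct_conv_sum_set)
  have d23: "k < m \<Longrightarrow> d (zs!k) \<in> {2,3}" for k using sz nth_mem[of k zs] unfolding m_def V23_def by auto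
  have T2m: "2 * m \<le> T"
  proof -
    have "(\<Sum>v\<in>V23. 2) \<le> T" unfolding T_def by (rule sum_mono) (auto simp: V23_def)
    then show ?thesis using mc by simp
  qed
  have condT: "T + 1 \<le> m + M" using cond unfolding T_def V23_def[symmetric] mc .
  define L where "L = T - M"
  define S where "S = T - 2 * L"
  have F1: "L = 0 \<or> L < m" unfolding L_def using condT by linarith
  have SL: "S + L \<le> M" unfolding S_def L_def using condT T2m by linarith
  have SL2: "L > 0 \<Longrightarrow> S + L = M" unfolding S_def L_def using condT T2m by linarith
  have TS: "T = S + 2 * L" unfolding S_def L_def using condT T2m by linarith
  have S2: "L > 0 \<Longrightarrow> S \<ge> 2" unfolding S_def L_def using condT T2m by linarith
  define ev where "ev k = d (zs!k) - (if 1 \<le> k \<and> k \<le> L then 1 else 0) - (if k < L then 1 else 0)" for k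
  define es where "es = map ev [0..<m]"
  define ds where "ds = map d ys"
  define R where "R = sum_list ds"
  have les: "length es = m" unfolding es_def by simp
  have lds: "length ds = length ys" unfolding ds_def by simp
  have esk: "k < m \<Longrightarrow> es ! k = ev k" for k unfolding es_def by simp
  have dsk: "k < length ys \<Longrightarrow> ds ! k = d (ys ! k)" for k unfolding ds_def by simp
  have evd: "k < m \<Longrightarrow> ev k + (if 1 \<le> k \<and> k \<le> L then 1 else 0) + (if k < L then 1 else 0) = d (zs!k)" for k
    using d23[of k] unfolding ev_def by auto
  have F3: "sum_list es = S"
  proof -
    have s1: "sum_list es = (\<Sum>k<m. ev k)" unfolding es_def by (rule sum_list_upt_nat)
    have "(\<Sum>k<m. ev k + (if 1 \<le> k \<and> k \<le> L then 1 else 0) + (if k < L then 1 else 0)) = (\<Sum>k<m. d (zs!k))"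
      using evd by (intro sum.cong) auto
    also have "\<dots> = T" using Tl sum_list_nth_nat m_def by metis
    finally have s2: "(\<Sum>k<m. ev k) + (\<Sum>k<m. (if 1 \<le> k \<and> k \<le> L then 1 else 0)) + (\<Sum>k<m. (if k < L then 1 else 0)) = T"
      by (simp add: sum.distrib)
    have a: "(\<Sum>k<m. (if 1 \<le> k \<and> k \<le> L then 1 else (0::nat))) = L"
    proof -
      have "{k. k < m \<and> 1 \<le> k \<and> k \<le> L} = {1..L}" using F1 by auto
      then show ?thesis using ind_sum[where m=m and P="\<lambda>k. 1 \<le> k \<and> k \<le> L"] by simp
    qed
    have b: "(\<Sum>k<m. (if k < L then 1 else (0::nat))) = L"
    proof -
      have "{k. k < m \<and> k < L} = {..<L}" using F1 by auto
      then show ?thesis using ind_sum[where m=m and P="\<lambda>k. k < L"] by simp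
    qed
    show ?thesis using s1 s2 a b TS by linarith
  qed
  have F4: "S + L + R + L = M * dc"
  proof -
    have R1: "R = (\<Sum>v\<in>VR. d v)" unfolding R_def ds_def using dy sy by (simp add: sum_list_distinct_conv_sum_set)
    have U: "{..<N} = V23 \<union> VR" unfolding V23_def VR_def by auto
    have "(\<Sum>v<N. d v) = T + R" unfolding U T_def R1
      by (rule sum.union_disjoint) (use finV in \<open>auto simp: V23_def VR_def\<close>)
    then show ?thesis using tot TS by linarith
  qed
  have F5: "k < length ys \<Longrightarrow> ds ! k \<le> M" for k using dsk dle ysN nth_mem by metis
  define E' where "E' = {(zs ! blk es t, t) | t. t < S} \<union> {(zs!k, S+k) | k. k < L}
     \<union> {(zs!(k+1), S+k) | k. k < L} \<union> {(ys ! blk ds t, (S+L+t) mod M) | t. t < R}"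
  have blkes: "t < S \<Longrightarrow> blk es t < m" for t using blk_lt[of t es] F3 les by simp
  have blkds: "t < R \<Longrightarrow> blk ds t < length ys" for t using blk_lt[of t ds] lds R_def by simp
  have zinj: "i < m \<Longrightarrow> j < m \<Longrightarrow> zs!i = zs!j \<longleftrightarrow> i = j" for i j
    using nth_eq_iff_index_eq[OF dz] m_def by simp
  have yinj: "i < length ys \<Longrightarrow> j < length ys \<Longrightarrow> ys!i = ys!j \<longleftrightarrow> i = j" for i j
    using nth_eq_iff_index_eq[OF dy] by simp
  have zy: "i < m \<Longrightarrow> j < length ys \<Longrightarrow> zs!i \<noteq> ys!j" for i j
    using disj nth_mem m_def by (metis disjoint_iff)
  have memZ: "k < m \<Longrightarrow> (zs!k, c) \<in> E' \<longleftrightarrow>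
      (c < S \<and> blk es c = k) \<or> (k < L \<and> c = S+k) \<or> (1 \<le> k \<and> k \<le> L \<and> c = S+k-1)" for k c
  proof -
    assume k: "k < m"
    have A1: "(zs!k, c) \<in> {(zs ! blk es t, t) | t. t < S} \<longleftrightarrow> (c < S \<and> blk es c = k)"
      using zinj[OF k blkes] by auto
    have A2: "(zs!k, c) \<in> {(zs!k', S+k') | k'. k' < L} \<longleftrightarrow> (k < L \<and> c = S+k)"
    proof
      assume "(zs!k, c) \<in> {(zs!k', S+k') | k'. k' < L}"
      then obtain k' where "k' < L" "zs!k = zs!k'" "c = S+k'" by auto
      moreover have "k' < m" using F1 \<open>k' < L\<close> by auto
      ultimately show "k < L \<and> c = S+k" using zinj[OF k] by auto
    qed auto
    have A3: "(zs!k, c) \<in> {(zs!(k'+1), S+k') | k'. k' < L} \<longleftrightarrow> (1 \<le> k \<and> k \<le> L \<and> c = S+k-1)"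
    proof
      assume "(zs!k, c) \<in> {(zs!(k'+1), S+k') | k'. k' < L}"
      then obtain k' where "k' < L" "zs!k = zs!(k'+1)" "c = S+k'" by auto
      moreover have "k'+1 < m" using F1 \<open>k' < L\<close> by auto
      ultimately show "1 \<le> k \<and> k \<le> L \<and> c = S+k-1" using zinj[OF k] by auto
    next
      assume "1 \<le> k \<and> k \<le> L \<and> c = S+k-1"
      then show "(zs!k, c) \<in> {(zs!(k'+1), S+k') | k'. k' < L}"
        by (intro CollectI exI[of _ "k - 1"]) auto
    qed
    have A4: "(zs!k, c) \<notin> {(ys ! blk ds t, (S+L+t) mod M) | t. t < R}"
      using zy[OF k blkds] by auto
    show ?thesis using A1 A2 A3 A4 unfolding E'_def by blast
  qed
  have memY: "j < length ys \<Longrightarrow> (ys!j, c) \<in> E' \<longleftrightarrow> (\<exists>t<R. blk ds t = j \<and> c = (S+L+t) mod M)" for j c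
  proof -
    assume j: "j < length ys"
    have B1: "(ys!j, c) \<notin> {(zs ! blk es t, t) | t. t < S}"
    proof
      assume "(ys!j, c) \<in> {(zs ! blk es t, t) | t. t < S}"
      then obtain t where "t < S" "ys!j = zs!(blk es t)" by auto
      then show False using zy[OF blkes[OF \<open>t < S\<close>] j] by metis
    qed
    have B2: "(ys!j, c) \<notin> {(zs!k', S+k') | k'. k' < L}"
    proof
      assume "(ys!j, c) \<in> {(zs!k', S+k') | k'. k' < L}"
      then obtain k' where "k' < L" "ys!j = zs!k'" by auto
      moreover have "k' < m" using F1 \<open>k' < L\<close> by auto
      ultimately show False using zy[OF _ j] by metis
    qed
    have B3: "(ys!j, c) \<notin> {(zs!(k'+1), S+k') | k'. k' < L}"
    proof
      assume "(ys!j, c) \<in> {(zs!(k'+1), S+k') | k'. k' < L}"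
      then obtain k' where "k' < L" "ys!j = zs!(k'+1)" by auto
      moreover have "k'+1 < m" using F1 \<open>k' < L\<close> by auto
      ultimately show False using zy[OF _ j] by metis
    qed
    have B4: "(ys!j, c) \<in> {(ys ! blk ds t, (S+L+t) mod M) | t. t < R} \<longleftrightarrow> (\<exists>t<R. blk ds t = j \<and> c = (S+L+t) mod M)"
      using yinj[OF j blkds] by auto
    show ?thesis using B1 B2 B3 B4 unfolding E'_def by blast
  qed
  have zN: "i < m \<Longrightarrow> zs!i < N" for i using zsN nth_mem m_def by metis
  have yN: "i < length ys \<Longrightarrow> ys!i < N" for i using ysN nth_mem by metis
  have sub: "E' \<subseteq> {..<N} \<times> {..<M}"
  proof -
    have p1: "{(zs ! blk es t, t) | t. t < S} \<subseteq> {..<N} \<times> {..<M}" using zN[OF blkes] SL by auto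
    have p2: "{(zs!k, S+k) | k. k < L} \<subseteq> {..<N} \<times> {..<M}"
    proof
      fix x assume "x \<in> {(zs!k, S+k) | k. k < L}"
      then obtain k where "k < L" "x = (zs!k, S+k)" by auto
      moreover have "k < m" using F1 \<open>k < L\<close> by auto
      ultimately show "x \<in> {..<N} \<times> {..<M}" using zN SL by auto
    qed
    have p3: "{(zs!(k+1), S+k) | k. k < L} \<subseteq> {..<N} \<times> {..<M}"
    proof
      fix x assume "x \<in> {(zs!(k+1), S+k) | k. k < L}"
      then obtain k where "k < L" "x = (zs!(k+1), S+k)" by auto
      moreover have "k + 1 < m" using F1 \<open>k < L\<close> by auto
      ultimately show "x \<in> {..<N} \<times> {..<M}" using zN SL by auto
    qed
    have p4: "{(ys ! blk ds t, (S+L+t) mod M) | t. t < R} \<subseteq> {..<N} \<times> {..<M}"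
    proof
      fix x assume "x \<in> {(ys ! blk ds t, (S+L+t) mod M) | t. t < R}"
      then obtain t where t: "t < R" "x = (ys ! blk ds t, (S+L+t) mod M)" by auto
      show "x \<in> {..<N} \<times> {..<M}" using yN[OF blkds[OF t(1)]] Mpos t(2) by simp
    qed
    show ?thesis unfolding E'_def by (intro Un_least p1 p2 p3 p4)
  qed
  have vdegZ: "k < m \<Longrightarrow> vdeg E' (zs!k) = d (zs!k)" for k
  proof -
    assume k: "k < m"
    define J where "J = (if k < L then {S+k} else {}) \<union> (if 1 \<le> k \<and> k \<le> L then {S+k-1} else {})"
    have eq: "{c. (zs!k, c) \<in> E'} = {t. t < sum_list es \<and> blk es t = k} \<union> J"
      unfolding J_def F3 using memZ[OF k] by auto
    have c1: "card {t. t < sum_list es \<and> blk es t = k} = ev k"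
      using blk_card[of k es] les esk[OF k] k by simp
    have cJ: "card J = (if 1 \<le> k \<and> k \<le> L then 1 else 0) + (if k < L then 1 else 0)"
      unfolding J_def by auto
    have dj: "{t. t < sum_list es \<and> blk es t = k} \<inter> J = {}" unfolding J_def F3 by auto
    have fJ: "finite J" unfolding J_def by simp
    have "vdeg E' (zs!k) = card ({t. t < sum_list es \<and> blk es t = k} \<union> J)" unfolding vdeg_def eq ..
    also have "\<dots> = ev k + card J" using card_Un_disjoint[OF _ fJ dj] c1 by simp
    finally show ?thesis using cJ evd[OF k] by simp
  qed
  have vdegY: "j < length ys \<Longrightarrow> vdeg E' (ys!j) = d (ys!j)" for j
  proof -
    assume j: "j < length ys"
    define off where "off = sum_list (take j ds)"
    have bs: "{t. t < R \<and> blk ds t = j} = {off..<off + ds!j}"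
      unfolding R_def off_def using blk_set[of j ds] j lds by simp
    have eq: "{c. (ys!j, c) \<in> E'} = (\<lambda>t. (S+L+t) mod M) ` {off..<off + ds!j}"
      unfolding bs[symmetric] using memY[OF j] by auto
    have "vdeg E' (ys!j) = card ((\<lambda>t. (S+L+t) mod M) ` {off..<off + ds!j})" unfolding vdeg_def eq ..
    also have "\<dots> = ds!j" using card_image[OF inj_mod_interval[OF F5[OF j]]] by simp
    finally show ?thesis using dsk[OF j] by simp
  qed
  have vdeg: "\<forall>v<N. vdeg E' v = d v"
  proof (intro allI impI)
    fix v assume "v < N"
    then consider "v \<in> set zs" | "v \<in> set ys" using cover by blast
    then show "vdeg E' v = d v"
      by cases (metis in_set_conv_nth m_def vdegZ, metis in_set_conv_nth vdegY)
  qed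
  have cdeg: "\<forall>c<M. cdeg E' c = dc"
  proof (intro allI impI)
    fix c assume c: "c < M"
    define K where "K = {k. k < m \<and> (zs!k, c) \<in> E'}"
    define Q where "Q = {t. t < R \<and> (S+L+t) mod M = c}"
    define Zc where "Zc = (\<lambda>k. zs!k) ` K"
    define Yc where "Yc = (\<lambda>t. ys!(blk ds t)) ` Q"
    have eq: "{v. (v, c) \<in> E'} = Zc \<union> Yc"
    proof (intro set_eqI iffI)
      fix v assume v: "v \<in> {v. (v, c) \<in> E'}"
      then have "v < N" using sub by auto
      then consider "v \<in> set zs" | "v \<in> set ys" using cover by blast
      then show "v \<in> Zc \<union> Yc"
      proof cases
        case 1
        then obtain k where "k < m" "v = zs!k" using in_set_conv_nth m_def by metis
        then show ?thesis using v unfolding Zc_def K_def by auto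
      next
        case 2
        then obtain j where j: "j < length ys" "v = ys!j" using in_set_conv_nth by metis
        then obtain t where "t < R" "blk ds t = j" "c = (S+L+t) mod M" using memY v by auto
        then show ?thesis using j unfolding Yc_def Q_def by auto
      qed
    next
      fix v assume "v \<in> Zc \<union> Yc"
      then show "v \<in> {v. (v, c) \<in> E'}"
      proof
        assume "v \<in> Zc" then show ?thesis unfolding Zc_def K_def by auto
      next
        assume "v \<in> Yc"
        then obtain t where t: "t < R" "(S+L+t) mod M = c" "v = ys!(blk ds t)" unfolding Yc_def Q_def by auto
        then show ?thesis using memY[OF blkds[OF t(1)]] by auto
      qed
    qed
    have djZY: "Zc \<inter> Yc = {}"
      unfolding Zc_def Yc_def K_def Q_def using zy blkds by blast
    have finK: "finite K" unfolding K_def by simp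
    have finQ: "finite Q" unfolding Q_def by simp
    have cZ: "card Zc = card K"
      unfolding Zc_def by (rule card_image) (auto simp: inj_on_def K_def zinj)
    have cY: "card Yc = card Q"
      unfolding Yc_def
    proof (rule card_image, rule inj_onI)
      fix t t' assume t: "t \<in> Q" and t': "t' \<in> Q" and e: "ys ! blk ds t = ys ! blk ds t'"
      have tR: "t < R" "t' < R" using t t' unfolding Q_def by auto
      have b: "blk ds t = blk ds t'" using yinj[OF blkds[OF tR(1)] blkds[OF tR(2)]] e by simp
      have md: "(S+L+t) mod M = (S+L+t') mod M" using t t' unfolding Q_def by auto
      show "t = t'"
      proof (cases "t \<le> t'")
        case True
        have "t' < t + ds ! blk ds t" using blk_close[of t ds t'] tR b True R_def by simp
        then have "t' < t + M" using F5[OF blkds[OF tR(1)]] by simp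
        then show ?thesis using mod_close[of t t' M "S+L"] True md by simp
      next
        case False
        have "t < t' + ds ! blk ds t'" using blk_close[of t' ds t] tR b False R_def by simp
        then have "t < t' + M" using F5[OF blkds[OF tR(2)]] by simp
        then show ?thesis using mod_close[of t' t M "S+L"] False md by simp
      qed
    qed
    have cK: "card K = (if c < S then 1 else if c < S + L then 2 else 0)"
    proof -
      have "K = (if c < S then {blk es c} else if c < S + L then {c - S, c - S + 1} else {})"
      proof (intro set_eqI iffI)
        fix k assume "k \<in> K"
        then have k: "k < m" "(zs!k, c) \<in> E'" unfolding K_def by auto
        show "k \<in> (if c < S then {blk es c} else if c < S + L then {c - S, c - S + 1} else {})"
          using memZ[OF k(1)] k(2) by auto
      next
        fix k assume k: "k \<in> (if c < S then {blk es c} else if c < S + L then {c - S, c - S + 1} else {})"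
        show "k \<in> K"
        proof (cases "c < S")
          case True
          then show ?thesis using k blkes[OF True] memZ[of "blk es c" c] unfolding K_def by auto
        next
          case False
          then have cS: "c < S + L" "k = c - S \<or> k = c - S + 1" using k by (auto split: if_splits)
          have Lm: "L < m" using F1 cS(1) False by linarith
          have k1: "k \<le> c - S + 1" using cS(2) by auto
          have k2: "c - S + 1 \<le> L" using cS(1) False by linarith
          have "k < m" using Lm k1 k2 by linarith
          have dd: "(k < L \<and> c = S+k) \<or> (1 \<le> k \<and> k \<le> L \<and> c = S+k-1)"
            using cS(2)
          proof
            assume "k = c - S" then show ?thesis using cS(1) False by linarith
          next
            assume "k = c - S + 1" then show ?thesis using cS(1) False by linarith
          qed
          have "(zs!k, c) \<in> E'" using memZ[OF \<open>k < m\<close>, THEN iffD2] dd by blast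
          then show ?thesis unfolding K_def using \<open>k < m\<close> by simp
        qed
      qed
      then show ?thesis by auto
    qed
    define X where "X = S + L"
    have XM: "X \<le> M" unfolding X_def using SL .
    have cntX: "card {u. u < X \<and> u mod M = c} = (if c < X then 1 else 0)"
    proof (cases "X = M")
      case True
      have x1: "X div M = 1" and x2: "X mod M = 0" using True Mpos by auto
      have e: "card {u. u < X \<and> u mod M = c} = X div M + (if c < X mod M then 1 else 0)"
        by (rule cnt_below[OF c])
      show ?thesis unfolding e x1 x2 using c True by simp
    next
      case False
      then have "X < M" using XM by simp
      then have x1: "X div M = 0" and x2: "X mod M = X" by auto
      have e: "card {u. u < X \<and> u mod M = c} = X div M + (if c < X mod M then 1 else 0)"
        by (rule cnt_below[OF c])
      show ?thesis unfolding e x1 x2 by simp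
    qed
    have split: "{u. u < X + R \<and> u mod M = c} = {u. u < X \<and> u mod M = c} \<union> (\<lambda>t. X + t) ` Q"
    proof (intro set_eqI iffI)
      fix u assume u: "u \<in> {u. u < X + R \<and> u mod M = c}"
      show "u \<in> {u. u < X \<and> u mod M = c} \<union> (\<lambda>t. X + t) ` Q"
      proof (cases "u < X")
        case True then show ?thesis using u by simp
      next
        case False
        then have e: "u = X + (u - X)" by simp
        have "u - X \<in> Q" unfolding Q_def using u False X_def by auto
        then have "u \<in> (\<lambda>t. X + t) ` Q" using e by (rule rev_image_eqI)
        then show ?thesis by simp
      qed
    next
      fix u assume "u \<in> {u. u < X \<and> u mod M = c} \<union> (\<lambda>t. X + t) ` Q"
      then show "u \<in> {u. u < X + R \<and> u mod M = c}" unfolding Q_def X_def by auto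
    qed
    have djs: "{u. u < X \<and> u mod M = c} \<inter> (\<lambda>t. X + t) ` Q = {}" by auto
    have cQ: "card {u. u < X + R \<and> u mod M = c} = (if c < X then 1 else 0) + card Q"
      unfolding split using card_Un_disjoint[OF _ _ djs] finQ cntX card_image[of "\<lambda>t. X + t" Q]
      by (simp add: inj_on_def)
    have XR: "X + R = M * dc - L" unfolding X_def using F4 by linarith
    have "cdeg E' c = card Zc + card Yc" unfolding cdeg_def eq
      using card_Un_disjoint[OF _ _ djZY] finK finQ Zc_def Yc_def by simp
    also have "\<dots> = card K + card Q" using cZ cY by simp
    finally have cd: "cdeg E' c = card K + card Q" .
    show "cdeg E' c = dc"
    proof (cases "L = 0")
      case True
      have "card {u. u < X + R \<and> u mod M = c} = dc"
        using cnt_below[OF c, of "M * dc"] XR True Mpos by simp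
      then show ?thesis using cd cK cQ True X_def by auto
    next
      case False
      have SLM: "S + L = M" using SL2 False by simp
      have Spos: "S < M" using SLM False by simp
      have dc2: "dc \<ge> 1"
      proof (rule ccontr)
        assume "\<not> dc \<ge> 1"
        then have "dc = 0" by simp
        then show False using F4 SLM Mpos by simp
      qed
      have md: "M * dc = M * (dc - 1) + M" using dc2 by (cases dc) auto
      have e: "M * dc - L = M * (dc - 1) + S" using md SLM by linarith
      have dv1: "(M * (dc - 1) + S) div M = dc - 1" using Spos by simp
      have dv2: "(M * (dc - 1) + S) mod M = S" using Spos by simp
      have e2: "card {u. u < M * dc - L \<and> u mod M = c} = (M * dc - L) div M + (if c < (M * dc - L) mod M then 1 else 0)"
        by (rule cnt_below[OF c])
      have cQ2: "card {u. u < X + R \<and> u mod M = c} = dc - 1 + (if c < S then 1 else 0)"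
        unfolding XR e2 unfolding e dv1 dv2 ..
      have XMM: "X = M" unfolding X_def using SLM .
      have cQ3: "card Q + 1 = dc - 1 + (if c < S then 1 else 0)" using cQ cQ2 XMM c by simp
      show ?thesis
      proof (cases "c < S")
        case True
        then have "card K = 1" using cK by simp
        moreover have "card Q + 1 = dc" using cQ3 True dc2 by simp
        ultimately show ?thesis using cd by simp
      next
        case False
        then have "card K = 2" using cK c SLM by simp
        moreover have "card Q + 1 = dc - 1" using cQ3 False by simp
        ultimately show ?thesis using cd by linarith
      qed
    qed
  qed
  have inz: "w \<in> set zs" if "adj23 E' (Inl w) (Inr c)" for w c
  proof -
    have w: "(w, c) \<in> E'" "vdeg E' w \<in> {2,3}" using that by auto
    have "(w, c) \<in> {..<N} \<times> {..<M}" using sub w(1) by (rule subsetD)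
    then have wN: "w < N" by simp
    then have "d w \<in> {2,3}" using w(2) vdeg by simp
    then show ?thesis using sz wN unfolding V23_def by simp
  qed
  define rk where "rk v = (SOME k. k < m \<and> zs!k = v)" for v
  have rkz: "k < m \<Longrightarrow> rk (zs!k) = k" for k
    unfolding rk_def by (rule some_equality) (auto simp: zinj)
  have acyc: "\<not> has_cycle23 E'"
  proof (rule no_cycle_rank[where rk=rk and f="\<lambda>v. S + rk v - 1"])
    fix v u c
    assume a1: "adj23 E' (Inl v) (Inr c)" and a2: "adj23 E' (Inl u) (Inr c)" and uv: "u \<noteq> v"
      and r: "rk u \<le> rk v"
    have vz: "v \<in> set zs" using inz[OF a1] .
    have uz: "u \<in> set zs" using inz[OF a2] .
    obtain k where km: "k < m" and zk: "zs ! k = v" using vz in_set_conv_nth m_def by metis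
    obtain k' where k'm: "k' < m" and zk': "zs ! k' = u" using uz in_set_conv_nth m_def by metis
    have rv: "rk v = k" using rkz[OF km] zk by simp
    have ru: "rk u = k'" using rkz[OF k'm] zk' by simp
    have "k' \<noteq> k" using zk zk' uv by auto
    then have kk: "k' < k" using r rv ru by simp
    have c1: "(zs!k, c) \<in> E'" using a1 zk by simp
    have c2: "(zs!k', c) \<in> E'" using a2 zk' by simp
    have A: "(c < S \<and> blk es c = k) \<or> (k < L \<and> c = S+k) \<or> (1 \<le> k \<and> k \<le> L \<and> c = S+k-1)"
      using memZ[OF km] c1 by blast
    have B: "(c < S \<and> blk es c = k') \<or> (k' < L \<and> c = S+k') \<or> (1 \<le> k' \<and> k' \<le> L \<and> c = S+k'-1)"
      using memZ[OF k'm] c2 by blast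
    show "c = S + rk v - 1" using junction_arith[OF kk A B] rv by simp
  qed
  show ?thesis using sub vdeg cdeg acyc by blast
qed



lemma sum23:
  fixes d :: "nat \<Rightarrow> nat"
  shows "(\<Sum>v\<in>{v. v < N \<and> d v \<in> {2,3}}. d v) = 2 * card {v. v < N \<and> d v = 2} + 3 * card {v. v < N \<and> d v = 3}"
    and "card {v. v < N \<and> d v \<in> {2,3}} = card {v. v < N \<and> d v = 2} + card {v. v < N \<and> d v = 3}"
proof -
  define A2 where "A2 = {v. v < N \<and> d v = 2}"
  define A3 where "A3 = {v. v < N \<and> d v = 3}"
  have AU: "{v. v < N \<and> d v \<in> {2,3}} = A2 \<union> A3" unfolding A2_def A3_def by auto
  have dj: "A2 \<inter> A3 = {}" unfolding A2_def A3_def by auto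
  have f2: "finite A2" "finite A3" unfolding A2_def A3_def by auto
  have s3: "(\<Sum>v\<in>A2. d v) = 2 * card A2"
  proof -
    have "(\<Sum>v\<in>A2. d v) = (\<Sum>v\<in>A2. 2)" by (rule sum.cong) (auto simp: A2_def)
    then show ?thesis by simp
  qed
  have s4: "(\<Sum>v\<in>A3. d v) = 3 * card A3"
  proof -
    have "(\<Sum>v\<in>A3. d v) = (\<Sum>v\<in>A3. 3)" by (rule sum.cong) (auto simp: A3_def)
    then show ?thesis by simp
  qed
  have "(\<Sum>v\<in>{v. v < N \<and> d v \<in> {2,3}}. d v) = (\<Sum>v\<in>A2. d v) + (\<Sum>v\<in>A3. d v)"
    unfolding AU by (rule sum.union_disjoint[OF f2 dj])
  then show "(\<Sum>v\<in>{v. v < N \<and> d v \<in> {2,3}}. d v) = 2 * card {v. v < N \<and> d v = 2} + 3 * card {v. v < N \<and> d v = 3}"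
    using s3 s4 unfolding A2_def A3_def by simp
  show "card {v. v < N \<and> d v \<in> {2,3}} = card {v. v < N \<and> d v = 2} + card {v. v < N \<and> d v = 3}"
    unfolding AU A2_def[symmetric] A3_def[symmetric] by (rule card_Un_disjoint[OF f2 dj])
qed

lemma ineq_equiv:
  fixes a b M dc :: nat
  assumes M: "M > 0" and dc: "dc > 0"
  shows "3 * (real (2*a) / real (M*dc)) + 4 * (real (3*b) / real (M*dc)) \<le> 6 / real dc * ((real M - 1) / real M)
     \<longleftrightarrow> a + 2*b + 1 \<le> M"
proof -
  have pos: "real M * real dc > 0" using M dc by simp
  have l: "3 * (real (2*a) / real (M*dc)) + 4 * (real (3*b) / real (M*dc)) = (6 * real (a + 2*b)) / (real M * real dc)"
    by (simp add: add_divide_distrib algebra_simps)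
  have r: "6 / real dc * ((real M - 1) / real M) = (6 * (real M - 1)) / (real M * real dc)"
    using pos by (simp add: field_simps)
  have "(6 * real (a + 2*b)) / (real M * real dc) \<le> (6 * (real M - 1)) / (real M * real dc)
      \<longleftrightarrow> 6 * real (a + 2*b) \<le> 6 * (real M - 1)"
    using pos by (simp add: divide_le_cancel)
  also have "\<dots> \<longleftrightarrow> real (a + 2*b + 1) \<le> real M" by (simp; linarith)
  also have "\<dots> \<longleftrightarrow> a + 2*b + 1 \<le> M" by (rule of_nat_le_iff)
  finally show ?thesis unfolding l r .
qed

lemma lam_val:
  assumes G: "ldpc_graph N M dc lam G"
  shows "lam i = real (i * card {v. v < N \<and> vdeg G v = i}) / real (M * dc)"
proof -
  have sub: "G \<subseteq> {..<N} \<times> {..<M}" and cd: "\<forall>c<M. cdeg G c = dc" and lm: "lam i = edge_dist G i"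
    using G unfolding ldpc_graph_def factor_graph_def by auto
  have "card G = (\<Sum>c<M. cdeg G c)" by (rule card_snd_sum[OF sub])
  also have "\<dots> = (\<Sum>c<M. dc)" using cd by (intro sum.cong) auto
  finally have cG: "card G = M * dc" by simp
  show ?thesis unfolding lm edge_dist_def cG card_deg_i[OF sub] ..
qed

theorem theorem4:
  fixes N M dc :: nat and lam :: "nat \<Rightarrow> real" and R :: real
  assumes realizable: "\<exists>E. ldpc_graph N M dc lam E"
    and rate: "R = design_rate dc lam"
    and rate': "R = 1 - real M / real N"
  shows "((\<exists>E. ldpc_graph N M dc lam E \<and> \<not> has_cycle23 E) \<longleftrightarrow>
           3 * lam 2 + 4 * lam 3 \<le> 6 / real dc * (((1 - R) - 1 / real N) / (1 - R)))
         \<and> 6 / real dc * (((1 - R) - 1 / real N) / (1 - R)) < 6 / real dc"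
proof -
  obtain E0 where G0: "ldpc_graph N M dc lam E0" using realizable by blast
  have sub0: "E0 \<subseteq> {..<N} \<times> {..<M}" and ne0: "E0 \<noteq> {}" and cd0: "\<forall>c<M. cdeg E0 c = dc"
    and lm0: "\<forall>i. lam i = edge_dist E0 i"
    using G0 unfolding ldpc_graph_def factor_graph_def by auto
  obtain v0 c0 where e0: "(v0, c0) \<in> E0" using ne0 by auto
  have vc0: "(v0, c0) \<in> {..<N} \<times> {..<M}" using sub0 e0 by (rule subsetD)
  then have N0: "N > 0" and M0: "M > 0" and c0M: "c0 < M" by auto
  have "finite {v. (v, c0) \<in> E0}"
    by (rule finite_subset[of _ "{..<N}"]) (use sub0 in auto)
  moreover have "v0 \<in> {v. (v, c0) \<in> E0}" using e0 by simp
  ultimately have "card {v. (v, c0) \<in> E0} > 0" using card_gt_0_iff by blast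
  then have dc0: "dc > 0" using cd0 c0M unfolding cdeg_def by simp
  have oneR: "1 - R = real M / real N" using rate' by simp
  have rhs: "6 / real dc * (((1 - R) - 1 / real N) / (1 - R)) = 6 / real dc * ((real M - 1) / real M)"
  proof -
    have h: "((real M / real N) - 1 / real N) / (real M / real N) = (real M - 1) / real M"
      using N0 M0 by (simp add: field_simps)
    show ?thesis unfolding oneR h ..
  qed
  define n2 where "n2 G = card {v. v < N \<and> vdeg G v = 2}" for G
  define n3 where "n3 G = card {v. v < N \<and> vdeg G v = 3}" for G
  have key: "ldpc_graph N M dc lam G \<Longrightarrow>
      (3 * lam 2 + 4 * lam 3 \<le> 6 / real dc * (((1 - R) - 1 / real N) / (1 - R))) \<longleftrightarrow> n2 G + 2 * n3 G + 1 \<le> M" for G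
  proof -
    assume G: "ldpc_graph N M dc lam G"
    show ?thesis unfolding rhs lam_val[OF G, of 2] lam_val[OF G, of 3] n2_def n3_def
      by (rule ineq_equiv[OF M0 dc0])
  qed
  have part1: "(\<exists>E. ldpc_graph N M dc lam E \<and> \<not> has_cycle23 E) \<longleftrightarrow>
           3 * lam 2 + 4 * lam 3 \<le> 6 / real dc * (((1 - R) - 1 / real N) / (1 - R))"
  proof
    assume "\<exists>E. ldpc_graph N M dc lam E \<and> \<not> has_cycle23 E"
    then obtain E where G: "ldpc_graph N M dc lam E" and ac: "\<not> has_cycle23 E" by blast
    have sub: "E \<subseteq> {..<N} \<times> {..<M}" using G unfolding ldpc_graph_def factor_graph_def by auto
    have "n2 E + 2 * n3 E + 1 \<le> M" unfolding n2_def n3_def by (rule acyclic_bound[OF sub M0 ac])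
    then show "3 * lam 2 + 4 * lam 3 \<le> 6 / real dc * (((1 - R) - 1 / real N) / (1 - R))"
      using key[OF G] by simp
  next
    assume ineq: "3 * lam 2 + 4 * lam 3 \<le> 6 / real dc * (((1 - R) - 1 / real N) / (1 - R))"
    have bound: "n2 E0 + 2 * n3 E0 + 1 \<le> M" using key[OF G0] ineq by simp
    define d where "d v = vdeg E0 v" for v
    have dle: "d v \<le> M" if "v < N" for v
    proof -
      have "{c. (v, c) \<in> E0} \<subseteq> {..<M}" using sub0 by auto
      then have "card {c. (v, c) \<in> E0} \<le> card {..<M}" by (rule card_mono[rotated]) simp
      then show ?thesis unfolding d_def vdeg_def by simp
    qed
    have fst_all: "card {e \<in> E0. True} = (\<Sum>v \<in> {v. v < N \<and> True}. vdeg E0 v)"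
      by (rule card_fst_sum[OF sub0])
    have cE0: "card E0 = M * dc"
    proof -
      have "card E0 = (\<Sum>c<M. cdeg E0 c)" by (rule card_snd_sum[OF sub0])
      also have "\<dots> = (\<Sum>c<M. dc)" using cd0 by (intro sum.cong) auto
      finally show ?thesis by simp
    qed
    have tot: "(\<Sum>v<N. d v) = M * dc"
    proof -
      have "{v. v < N \<and> True} = {..<N}" by auto
      then show ?thesis using fst_all cE0 unfolding d_def by simp
    qed
    have cond: "(\<Sum>v\<in>{v. v < N \<and> d v \<in> {2,3}}. d v) + 1 \<le> card {v. v < N \<and> d v \<in> {2,3}} + M"
    proof -
      have h1: "(\<Sum>v\<in>{v. v < N \<and> d v \<in> {2,3}}. d v) = 2 * card {v. v < N \<and> d v = 2} + 3 * card {v. v < N \<and> d v = 3}"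
        by (rule sum23(1))
      have h2: "card {v. v < N \<and> d v \<in> {2,3}} = card {v. v < N \<and> d v = 2} + card {v. v < N \<and> d v = 3}"
        by (rule sum23(2))
      have h3: "card {v. v < N \<and> d v = 2} + 2 * card {v. v < N \<and> d v = 3} + 1 \<le> M"
        using bound unfolding n2_def n3_def d_def .
      show ?thesis unfolding h1 h2 using h3 by linarith
    qed
    obtain E' where sub': "E' \<subseteq> {..<N} \<times> {..<M}" and vd: "\<forall>v<N. vdeg E' v = d v"
      and cd': "\<forall>c<M. cdeg E' c = dc" and ac': "\<not> has_cycle23 E'"
      using construct[OF M0 dle tot cond] by blast
    have vdeq: "vdeg E' v = vdeg E0 v" if "v < N" for v using vd that unfolding d_def by simp
    have cnt_eq: "card {e \<in> E'. P (vdeg E' (fst e))} = card {e \<in> E0. P (vdeg E0 (fst e))}" for P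
    proof -
      have "card {e \<in> E'. P (vdeg E' (fst e))} = (\<Sum>v \<in> {v. v < N \<and> P (vdeg E' v)}. vdeg E' v)"
        by (rule card_fst_sum[OF sub'])
      also have "\<dots> = (\<Sum>v \<in> {v. v < N \<and> P (vdeg E0 v)}. vdeg E0 v)"
      proof -
        have "{v. v < N \<and> P (vdeg E' v)} = {v. v < N \<and> P (vdeg E0 v)}" using vdeq by auto
        then show ?thesis using vdeq by (intro sum.cong) auto
      qed
      also have "\<dots> = card {e \<in> E0. P (vdeg E0 (fst e))}"
        by (rule card_fst_sum[OF sub0, symmetric])
      finally show ?thesis .
    qed
    have cardE: "card E' = card E0" using cnt_eq[of "\<lambda>_. True"] by simp
    have ed: "edge_dist E' i = edge_dist E0 i" for i
      unfolding edge_dist_def cardE using cnt_eq[of "\<lambda>x. x = i"] by simp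
    have "E' \<noteq> {}" using cardE cE0 M0 dc0 by auto
    then have "ldpc_graph N M dc lam E'"
      unfolding ldpc_graph_def factor_graph_def using sub' cd' ed lm0 by simp
    then show "\<exists>E. ldpc_graph N M dc lam E \<and> \<not> has_cycle23 E" using ac' by blast
  qed
  have part2: "6 / real dc * (((1 - R) - 1 / real N) / (1 - R)) < 6 / real dc"
  proof -
    have "(real M - 1) / real M < 1" using M0 by simp
    moreover have "6 / real dc > 0" using dc0 by simp
    ultimately have "6 / real dc * ((real M - 1) / real M) < 6 / real dc * 1"
      by (rule mult_strict_left_mono)
    then show ?thesis unfolding rhs by simp
  qed
  show ?thesis using part1 part2 by blast
qed

end
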